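(* If $\|g\|_{L^\infty(\mathbb{R}^n)}\le\kappa_3/2$, then for every set $F\subseteq\mathbb{R}^n$ and every $R>1$, $$\mathcal E(F,B_R):=\iint_{B_R\times\mathbb{R}^n}\chi_F(x)\chi_{F^c}(y)K(x,y)\,dx\,dy+\int_{\mathcal Q(B_R)_1\cap F}g(x)\,dx\ \ge\ 0.$$
   Context: Standing assumptions: $n\ge2$, $Q=(0,1)^n$. The kernel $K:\mathbb{R}^n\times\mathbb{R}^n\to[0,\infty)$ is measurable and satisfies: (K1) $K(y,x)=K(x,y)=K(x+w,y+w)=K(Rx,Ry)$ for all $x,y,w\in\mathbb{R}^n$ and all $R\in SO(n)$; (K2) $\int_{\mathbb{R}^n}|h|\,K(h,0)\,dh<\infty$; (K3) there are constants $0<s_1<\tfrac12<s_2<1$, $\delta>0$ and $0<\kappa_1\le\kappa_2$ such that $\kappa_1\,\chi_{(0,\delta)}(|x-y|)\,|x-y|^{-n-2s_1}\le K(x,y)\le\kappa_2\min\{|x-y|^{-n-2s_1},|x-y|^{-n-2s_2}\}$ for all $x\neq y$; (K4) $\inf_{(x,y)\in Q\times Q}K(x,y)\ge\kappa_3$ for some constant $\kappa_3>0$. The forcing term $g\in L^\infty(\mathbb{R}^n)$ is $\mathbb{Z}^n$-periodic with $\int_Q g(x)\,dx=0$. $B_R$ is the open ball of radius $R$ centered at the origin, $F^c=\mathbb{R}^n\setminus F$, and $\mathcal Q(B_R)_1$ is the union of all cubes $k+Q$, $k\in\mathbb{Z}^n$, contained in $B_R$. *)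

theory Defs
  imports "HOL-Analysis.Analysis"
begin

text \<open>Points of R^n are vectors of type real^'n; n = CARD('n).\<close>

definition int_vec :: "real^'n \<Rightarrow> bool" where
  "int_vec k \<longleftrightarrow> (\<forall>i. k $ i \<in> \<int>)"

definition unit_cube :: "(real^'n) set" where
  "unit_cube = box 0 One"

definition SO_mat :: "real^'n^'n \<Rightarrow> bool" where
  "SO_mat R \<longleftrightarrow> orthogonal_matrix R \<and> det R = 1"

definition cube_union :: "(real^'n) set \<Rightarrow> (real^'n) set" where
  "cube_union E = \<Union>{(\<lambda>x. k + x) ` unit_cube | k. int_vec k \<and> (\<lambda>x. k + x) ` unit_cube \<subseteq> E}"

definition kernel_ok :: "(real^'n \<Rightarrow> real^'n \<Rightarrow> real) \<Rightarrow> real \<Rightarrow> bool" where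
  "kernel_ok K \<kappa>3 \<longleftrightarrow>
     (\<lambda>(x,y). K x y) \<in> borel_measurable (lborel \<Otimes>\<^sub>M lborel) \<and>
     (\<forall>x y. K x y \<ge> 0) \<and>
     \<comment> \<open>(K1)\<close>
     (\<forall>x y. K y x = K x y) \<and>
     (\<forall>x y w. K (x + w) (y + w) = K x y) \<and>
     (\<forall>x y R. SO_mat R \<longrightarrow> K (R *v x) (R *v y) = K x y) \<and>
     \<comment> \<open>(K2)\<close>
     (\<integral>\<^sup>+ h. ennreal (norm h * K h 0) \<partial>lborel) < \<infinity> \<and>
     \<comment> \<open>(K3)\<close>
     (\<exists>s1 s2 \<delta> \<kappa>1 \<kappa>2. 0 < s1 \<and> s1 < 1/2 \<and> 1/2 < s2 \<and> s2 < 1 \<and> \<delta> > 0 \<and>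
        0 < \<kappa>1 \<and> \<kappa>1 \<le> \<kappa>2 \<and>
        (\<forall>x y. x \<noteq> y \<longrightarrow>
           \<kappa>1 * indicator {0<..<\<delta>} (dist x y) * dist x y powr (- real CARD('n) - 2 * s1) \<le> K x y \<and>
           K x y \<le> \<kappa>2 * min (dist x y powr (- real CARD('n) - 2 * s1))
                              (dist x y powr (- real CARD('n) - 2 * s2)))) \<and>
     \<comment> \<open>(K4)\<close>
     \<kappa>3 > 0 \<and> (\<forall>x\<in>unit_cube. \<forall>y\<in>unit_cube. K x y \<ge> \<kappa>3)"

definition forcing_ok :: "(real^'n \<Rightarrow> real) \<Rightarrow> bool" where
  "forcing_ok g \<longleftrightarrow>
     g \<in> borel_measurable lebesgue \<and>
     (\<exists>C. AE x in lebesgue. \<bar>g x\<bar> \<le> C) \<and>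
     (\<forall>x k. int_vec k \<longrightarrow> g (x + k) = g x) \<and>
     (LINT x : unit_cube | lebesgue. g x) = 0"

text \<open>The energy E(F, B_R) (extended real; the interaction term may be infinite).\<close>
definition energy ::
  "(real^'n \<Rightarrow> real^'n \<Rightarrow> real) \<Rightarrow> (real^'n \<Rightarrow> real) \<Rightarrow> (real^'n) set \<Rightarrow> real \<Rightarrow> ereal" where
  "energy K g F R =
     enn2ereal (\<integral>\<^sup>+ x. \<integral>\<^sup>+ y. indicator (ball 0 R) x * indicator F x * indicator (- F) y
                              * ennreal (K x y) \<partial>lebesgue \<partial>lebesgue)
     + ereal (LINT x : cube_union (ball 0 R) \<inter> F | lebesgue. g x)"

end

theory Submission
  imports Defs
begin


lemma One_nth_cart: "(One :: real^'n) $ i = 1"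
  by (metis Cart_1 one_index)

lemma One_nth_cart2[simp]: "(\<Sum>x\<in>(Basis :: (real^'n) set). x $ i) = 1"
  by (metis (lifting) ext Cart_1 one_index sum_component)

lemma shift_cube:
  fixes x k :: "real^'n"
  assumes a: "x \<in> box k (k + One)"
  shows "x - k \<in> unit_cube"
  unfolding unit_cube_def mem_box_cart
proof
  fix i
  have "k$i < x$i" "x$i < k$i+1" using a by (auto simp: mem_box_cart One_nth_cart2)
  then show "(0::real^'n) $ i < (x - k) $ i \<and> (x - k) $ i < One $ i" by simp
qed

lemma cube_img: "(\<lambda>x. k + x) ` (unit_cube :: (real^'n) set) = box k (k + One)"
proof (rule set_eqI)
  fix x :: "real^'n"
  show "x \<in> (\<lambda>x. k + x) ` unit_cube \<longleftrightarrow> x \<in> box k (k + One)"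
  proof
    assume "x \<in> (\<lambda>x. k + x) ` unit_cube"
    then show "x \<in> box k (k + One)" by (auto simp: unit_cube_def mem_box_cart One_nth_cart2)
  next
    assume a: "x \<in> box k (k + One)"
    have "x - k \<in> unit_cube" using a by (rule shift_cube)
    then show "x \<in> (\<lambda>x. k + x) ` unit_cube" by (intro image_eqI[of _ _ "x - k"]) auto
  qed
qed

lemma cube_union_eq: "cube_union E = \<Union> ((\<lambda>k. box k (k + One)) ` {k. int_vec k \<and> box k (k + One) \<subseteq> (E :: (real^'n) set)})"
  unfolding cube_union_def cube_img by auto

lemma cube_disj:
  fixes k j :: "real^'n"
  assumes "int_vec k" "int_vec j" "k \<noteq> j"
  shows "box k (k + One) \<inter> box j (j + One) = {}"
proof (rule ccontr)
  assume "box k (k + One) \<inter> box j (j + One) \<noteq> {}"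
  then obtain x where x: "x \<in> box k (k + One)" "x \<in> box j (j + One)" by blast
  obtain i where i: "k $ i \<noteq> j $ i" using assms(3) by (metis vec_eq_iff)
  obtain a where a: "k $ i = of_int a" using assms(1) unfolding int_vec_def by (metis Ints_cases)
  obtain b where b: "j $ i = of_int b" using assms(2) unfolding int_vec_def by (metis Ints_cases)
  have "a \<noteq> b" using i a b by auto
  moreover have "k $ i < x $ i" "x $ i < k $ i + 1" "j $ i < x $ i" "x $ i < j $ i + 1"
    using x by (auto simp: mem_box_cart One_nth_cart2)
  ultimately show False using a b
    by (smt (verit) of_int_less_iff of_int_add of_int_1 zless_imp_add1_zle)
qed

lemma cube_finite:
  "finite {k :: real^'n. int_vec k \<and> box k (k + One) \<subseteq> ball 0 R}"
proof -
  define M where "M = \<lceil>R\<rceil> + 1"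
  have "{k :: real^'n. int_vec k \<and> box k (k + One) \<subseteq> ball 0 R} \<subseteq>
        (\<lambda>f. \<chi> i. real_of_int (f i)) ` (PiE UNIV (\<lambda>i. {-M..M}))"
  proof
    fix k :: "real^'n"
    assume k: "k \<in> {k. int_vec k \<and> box k (k + One) \<subseteq> ball 0 R}"
    define m where "m = k + (1/2) *\<^sub>R One"
    have "m \<in> box k (k + One)" by (simp add: m_def mem_box_cart One_nth_cart2)
    then have mR: "norm m < R" using k by auto
    have bnd: "\<bar>k $ i\<bar> \<le> R + 1" for i
    proof -
      have "\<bar>m $ i\<bar> \<le> norm m" by (rule component_le_norm_cart)
      moreover have "m $ i = k $ i + 1/2" by (simp add: m_def)
      ultimately show ?thesis using mR by linarith
    qed
    define f where "f = (\<lambda>i. \<lfloor>k $ i\<rfloor>)"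
    have kf: "k $ i = real_of_int (f i)" for i
    proof -
      have "k $ i \<in> \<int>" using k by (simp add: int_vec_def)
      then obtain z where z: "k $ i = of_int z" by (auto elim: Ints_cases)
      then show ?thesis by (simp add: f_def)
    qed
    have "f i \<in> {-M..M}" for i
    proof -
      have "\<bar>real_of_int (f i)\<bar> \<le> R + 1" using bnd[of i] kf[of i] by simp
      moreover have "R \<le> of_int \<lceil>R\<rceil>" by (rule le_of_int_ceiling)
      moreover have "real_of_int M = of_int \<lceil>R\<rceil> + 1" by (simp add: M_def)
      ultimately have "\<bar>real_of_int (f i)\<bar> \<le> real_of_int M" by linarith
      then show ?thesis by (simp add: abs_le_iff) 
    qed
    then have "f \<in> PiE UNIV (\<lambda>i. {-M..M})" by auto
    moreover have "k = (\<chi> i. real_of_int (f i))" using kf by (simp add: vec_eq_iff)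
    ultimately show "k \<in> (\<lambda>f. \<chi> i. real_of_int (f i)) ` (PiE UNIV (\<lambda>i. {-M..M}))" by blast
  qed
  moreover have "finite (PiE (UNIV::'n set) (\<lambda>i. {-M..M}))" by (intro finite_PiE) auto
  ultimately show ?thesis using finite_subset finite_imageI by blast
qed

lemma cube_meas: "box k (k + One) \<in> sets lebesgue" "emeasure lebesgue (box k (k + One :: real^'n)) = 1"
proof -
  show "box k (k + One) \<in> sets lebesgue" by simp
  have "emeasure lborel (box k (k + One :: real^'n)) = 1"
    by (subst emeasure_lborel_box) (auto simp: inner_add_left)
  then show "emeasure lebesgue (box k (k + One :: real^'n)) = 1"
    by (simp add: emeasure_completion)
qed

lemma K_cube:
  assumes "kernel_ok K \<kappa>3" "x \<in> box k (k + One)" "y \<in> box k (k + One)"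
  shows "K x y \<ge> \<kappa>3"
proof -
  have "K x y = K ((x - k) + k) ((y - k) + k)" by simp
  also have "\<dots> = K (x - k) (y - k)" using assms(1) unfolding kernel_ok_def by blast
  finally have e: "K x y = K (x - k) (y - k)" .
  have "x - k \<in> unit_cube" "y - k \<in> unit_cube" using assms(2,3) by (auto intro: shift_cube)
  then show ?thesis using assms(1) e unfolding kernel_ok_def by auto
qed



lemma g_int:
  assumes "forcing_ok g" "S \<in> sets lebesgue" "emeasure lebesgue S < \<infinity>"
  shows "set_integrable lebesgue S (g :: real^'n \<Rightarrow> real)"
proof -
  obtain C where C: "AE x in lebesgue. \<bar>g x\<bar> \<le> C" and gm: "g \<in> borel_measurable lebesgue"
    using assms(1) unfolding forcing_ok_def by blast
  show ?thesis unfolding set_integrable_def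
    by (rule integrableI_bounded_set_indicator[where B=C, OF assms(2) gm assms(3)])
       (use C in \<open>auto elim!: eventually_mono\<close>)
qed

lemma g_cube0:
  assumes "forcing_ok g" "int_vec k"
  shows "(LINT x : box k (k + One) | lebesgue. (g :: real^'n \<Rightarrow> real) x) = 0"
proof -
  have i0: "set_integrable lebesgue (box 0 One) g"
    using g_int[OF assms(1)] cube_meas[of 0] by simp
  have ik: "set_integrable lebesgue (box k (k + One)) g"
    using g_int[OF assms(1)] cube_meas[of k] by simp
  have "g integrable_on cbox 0 One"
    using set_lebesgue_integral_eq_integral(1)[OF i0] integrable_on_open_interval by blast
  then have h: "(g has_integral integral (cbox 0 One) g) (cbox 0 One)" by blast
  have gc: "g \<circ> (+) k = g"
  proof
    fix x
    have per: "\<forall>x k. int_vec k \<longrightarrow> g (x + k) = g x" using assms(1) unfolding forcing_ok_def by blast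
    have "g (x + k) = g x" using per assms(2) by blast
    then show "(g \<circ> (+) k) x = g x" by (simp add: add.commute)
  qed
  have "(g has_integral integral (cbox 0 One) g) (cbox (0 + k) (One + k))"
    using h has_integral_shift_cbox_iff[of g k "integral (cbox 0 One) g" 0 One] unfolding gc by blast
  then have "integral (cbox (0 + k) (One + k)) g = integral (cbox 0 One) g"
    by (rule integral_unique)
  then have "integral (cbox k (k + One)) g = integral (cbox 0 One) g"
    by (simp only: add.left_neutral add.commute[of One k])
  moreover have "(LINT x : box k (k + One) | lebesgue. g x) = integral (cbox k (k + One)) g"
    using set_lebesgue_integral_eq_integral(2)[OF ik] by (simp add: integral_open_interval)
  moreover have "(LINT x : box 0 One | lebesgue. g x) = integral (cbox 0 One) g"
    using set_lebesgue_integral_eq_integral(2)[OF i0] by (simp add: integral_open_interval)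
  moreover have "(LINT x : box 0 One | lebesgue. g x) = 0"
    using assms(1) unfolding forcing_ok_def unit_cube_def by simp
  ultimately show ?thesis by simp
qed

lemma g_piece:
  fixes g :: "real^'n \<Rightarrow> real"
  assumes "forcing_ok g" "int_vec k" "AE x in lebesgue. \<bar>g x\<bar> \<le> \<kappa>3 / 2" "\<kappa>3 > 0"
    and F: "F \<in> sets lebesgue"
  shows "(LINT x : box k (k + One) \<inter> F | lebesgue. g x) \<ge>
         - (\<kappa>3 * measure lebesgue (box k (k + One) \<inter> F) * measure lebesgue (box k (k + One) - F))"
proof -
  define Q where "Q = box k (k + One)"
  define S where "S = Q \<inter> F"
  define T where "T = Q - F"
  have Qm: "Q \<in> sets lebesgue" "emeasure lebesgue Q = 1" unfolding Q_def using cube_meas by auto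
  have Sm: "S \<in> sets lebesgue" "T \<in> sets lebesgue" unfolding S_def T_def using Qm F by auto
  have le1: "emeasure lebesgue S \<le> emeasure lebesgue Q" 
    by (rule emeasure_mono) (use Qm in \<open>auto simp: S_def\<close>)
  have le2: "emeasure lebesgue T \<le> emeasure lebesgue Q"
    by (rule emeasure_mono) (use Qm in \<open>auto simp: T_def\<close>)
  have Sf: "emeasure lebesgue S < \<infinity>" "emeasure lebesgue T < \<infinity>"
    using le1 le2 Qm(2) by (metis ennreal_1 ennreal_less_top le_less_trans infinity_ennreal_def)+
  have iS: "set_integrable lebesgue S g" and iT: "set_integrable lebesgue T g"
    using g_int[OF assms(1)] Sm Sf by auto
  have sum0: "(LINT x : S | lebesgue. g x) + (LINT x : T | lebesgue. g x) = 0"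
  proof -
    have "S \<union> T = Q" "S \<inter> T = {}" unfolding S_def T_def by auto
    then have "(LINT x : Q | lebesgue. g x) = (LINT x : S | lebesgue. g x) + (LINT x : T | lebesgue. g x)"
      using set_integral_Un[OF _ iS iT] by metis
    then show ?thesis using g_cube0[OF assms(1,2)] unfolding Q_def by simp
  qed
  define a where "a = measure lebesgue S"
  define b where "b = measure lebesgue T"
  have ab: "a + b = 1" "a \<ge> 0" "b \<ge> 0"
  proof -
    have QT: "emeasure lebesgue Q \<noteq> \<infinity>" using Qm(2) by simp
    have "T = Q - S" unfolding S_def T_def by auto
    then have "b = measure lebesgue Q - a" unfolding a_def b_def
      using measure_Diff[OF QT Qm(1) Sm(1)] unfolding S_def by simp
    moreover have "measure lebesgue Q = 1" using Qm by (simp add: measure_def)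
    ultimately show "a + b = 1" by simp
  qed (auto simp: a_def b_def)
  have ciS: "set_integrable lebesgue S (\<lambda>_. c::real)" for c
    unfolding set_integrable_def
    by (rule integrableI_bounded_set_indicator[where B="\<bar>c\<bar>"]) (use Sm Sf in auto)
  have ciT: "set_integrable lebesgue T (\<lambda>_. c::real)" for c
    unfolding set_integrable_def
    by (rule integrableI_bounded_set_indicator[where B="\<bar>c\<bar>"]) (use Sm Sf in auto)
  have lowS: "(LINT x : S | lebesgue. g x) \<ge> - (\<kappa>3/2) * a"
  proof -
    have "(LINT x : S | lebesgue. (- (\<kappa>3/2))) \<le> (LINT x : S | lebesgue. g x)"
      by (rule set_integral_mono_AE[OF ciS iS]) (use assms(3) in \<open>auto elim!: eventually_mono\<close>)
    moreover have "(LINT x : S | lebesgue. (- (\<kappa>3/2))) = measure lebesgue S *\<^sub>R (- (\<kappa>3/2))"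
      by (rule set_integral_const) (use Sm Sf in auto)
    ultimately show ?thesis by (simp add: a_def algebra_simps)
  qed
  have upT: "(LINT x : T | lebesgue. g x) \<le> (\<kappa>3/2) * b"
  proof -
    have "(LINT x : T | lebesgue. g x) \<le> (LINT x : T | lebesgue. (\<kappa>3/2))"
      by (rule set_integral_mono_AE[OF iT ciT]) (use assms(3) in \<open>auto elim!: eventually_mono\<close>)
    moreover have "(LINT x : T | lebesgue. (\<kappa>3/2)) = measure lebesgue T *\<^sub>R (\<kappa>3/2)"
      by (rule set_integral_const) (use Sm Sf in auto)
    ultimately show ?thesis by (simp add: b_def algebra_simps)
  qed
  have key: "(LINT x : S | lebesgue. g x) \<ge> - (\<kappa>3 * a * b)"
  proof (cases "a \<le> b")
    case True
    then have "b \<ge> 1/2" using ab by simp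
    then have "\<kappa>3 * a * b \<ge> \<kappa>3 * a * (1/2)" using ab assms(4) by (intro mult_left_mono) auto
    then show ?thesis using lowS by simp
  next
    case False
    then have "a \<ge> 1/2" using ab by simp
    then have "\<kappa>3 * b * a \<ge> \<kappa>3 * b * (1/2)" using ab assms(4) by (intro mult_left_mono) auto
    then show ?thesis using upT sum0 by (simp add: algebra_simps)
  qed
  then show ?thesis unfolding a_def b_def S_def T_def Q_def .
qed



theorem mainTheorem12:
  fixes K :: "real^'n \<Rightarrow> real^'n \<Rightarrow> real" and g :: "real^'n \<Rightarrow> real" and \<kappa>3 :: real
  assumes "CARD('n) \<ge> 2"
    and "kernel_ok K \<kappa>3"
    and "forcing_ok g"
    and "AE x in lebesgue. \<bar>g x\<bar> \<le> \<kappa>3 / 2"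
  shows "\<forall>F R. F \<in> sets lebesgue \<longrightarrow> R > 1 \<longrightarrow> energy K g F R \<ge> 0"
proof (intro allI impI)
  fix F :: "(real^'n) set" and R :: real
  assume F[measurable]: "F \<in> sets lebesgue" and R: "R > 1"
  have k3: "\<kappa>3 > 0" using assms(2) unfolding kernel_ok_def by blast
  define C where "C = {k :: real^'n. int_vec k \<and> box k (k + One) \<subseteq> ball 0 R}"
  define Q where "Q = (\<lambda>k::real^'n. box k (k + One))"
  have finC: "finite C" using cube_finite unfolding C_def .
  have disj: "Q k \<inter> Q j = {}" if "k \<in> C" "j \<in> C" "k \<noteq> j" for k j
    using cube_disj that unfolding C_def Q_def by blast
  have Qm[measurable]: "Q k \<in> sets lebesgue" for k unfolding Q_def by simp
  have Qe: "emeasure lebesgue (Q k) = 1" for k unfolding Q_def by (rule cube_meas(2))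
  have QF[measurable]: "Q k \<inter> F \<in> sets lebesgue" "Q k - F \<in> sets lebesgue" for k using Qm F by auto
  define a where "a k = measure lebesgue (Q k \<inter> F)" for k
  define b where "b k = measure lebesgue (Q k - F)" for k
  have fin1: "emeasure lebesgue (Q k \<inter> F) \<noteq> \<infinity>" "emeasure lebesgue (Q k - F) \<noteq> \<infinity>" for k
  proof -
    have "emeasure lebesgue (Q k \<inter> F) \<le> emeasure lebesgue (Q k)"
      by (rule emeasure_mono) (use Qm in auto)
    then show "emeasure lebesgue (Q k \<inter> F) \<noteq> \<infinity>" using Qe[of k] by (metis ennreal_1 ennreal_less_top infinity_ennreal_def leD)
    have "emeasure lebesgue (Q k - F) \<le> emeasure lebesgue (Q k)"
      by (rule emeasure_mono) (use Qm in auto)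
    then show "emeasure lebesgue (Q k - F) \<noteq> \<infinity>" using Qe[of k] by (metis ennreal_1 ennreal_less_top infinity_ennreal_def leD)
  qed
  have ea: "emeasure lebesgue (Q k \<inter> F) = ennreal (a k)" for k
    unfolding a_def by (rule emeasure_eq_ennreal_measure) (use fin1(1)[of k] in simp)
  have eb: "emeasure lebesgue (Q k - F) = ennreal (b k)" for k
    unfolding b_def by (rule emeasure_eq_ennreal_measure) (use fin1(2)[of k] in simp)
  have ab0: "a k \<ge> 0" "b k \<ge> 0" for k unfolding a_def b_def by auto
  define S where "S = (\<Sum>k\<in>C. \<kappa>3 * a k * b k)"
  have S0: "S \<ge> 0" unfolding S_def using ab0 k3 by (intro sum_nonneg) auto

  have cu: "cube_union (ball 0 R) \<inter> F = \<Union> ((\<lambda>k. Q k \<inter> F) ` C)"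
    unfolding cube_union_eq C_def Q_def by auto
  have dfam: "disjoint_family_on (\<lambda>k. Q k \<inter> F) C"
    unfolding disjoint_family_on_def using disj by blast
  have ind: "indicator (cube_union (ball 0 R) \<inter> F) x = (\<Sum>k\<in>C. indicator (Q k \<inter> F) x :: real)" for x
    unfolding cu by (rule indicator_UN_disjoint[OF finC dfam])
  have intk: "integrable lebesgue (\<lambda>x. indicator (Q k \<inter> F) x *\<^sub>R g x)" for k
    using g_int[OF assms(3) QF(1)[of k]] fin1(1)[of k] unfolding set_integrable_def
    by (simp add: less_top[symmetric])
  have G: "(LINT x : cube_union (ball 0 R) \<inter> F | lebesgue. g x) = (\<Sum>k\<in>C. LINT x : Q k \<inter> F | lebesgue. g x)"
    unfolding set_lebesgue_integral_def ind scaleR_sum_left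
    by (rule Bochner_Integration.integral_sum[where f="\<lambda>k x. indicator (Q k \<inter> F) x *\<^sub>R g x"]) (rule intk)
  have Glow: "(LINT x : cube_union (ball 0 R) \<inter> F | lebesgue. g x) \<ge> - S"
  proof -
    have "(\<Sum>k\<in>C. - (\<kappa>3 * a k * b k)) \<le> (\<Sum>k\<in>C. LINT x : Q k \<inter> F | lebesgue. g x)"
    proof (rule sum_mono)
      fix k assume "k \<in> C"
      then have "int_vec k" unfolding C_def by auto
      then show "- (\<kappa>3 * a k * b k) \<le> (LINT x : Q k \<inter> F | lebesgue. g x)"
        using g_piece[OF assms(3) _ assms(4) k3 F] unfolding a_def b_def Q_def by blast
    qed
    then show ?thesis unfolding G S_def by (simp add: sum_negf)
  qed

  have inner: "(\<Sum>k\<in>C. indicator (Q k \<inter> F) x * ennreal (\<kappa>3 * b k)) \<le>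
     (\<integral>\<^sup>+ y. indicator (ball 0 R) x * indicator F x * indicator (- F) y * ennreal (K x y) \<partial>lebesgue)" for x
  proof (cases "\<exists>k\<in>C. x \<in> Q k \<inter> F")
    case False
    then have "(\<Sum>k\<in>C. indicator (Q k \<inter> F) x * ennreal (\<kappa>3 * b k)) = 0"
      by (intro sum.neutral) auto
    then show ?thesis by simp
  next
    case True
    then obtain k0 where k0: "k0 \<in> C" "x \<in> Q k0 \<inter> F" by blast
    have rest: "(\<Sum>k\<in>C - {k0}. indicator (Q k \<inter> F) x * ennreal (\<kappa>3 * b k)) = 0"
    proof (intro sum.neutral ballI)
      fix k assume "k \<in> C - {k0}"
      then have "x \<notin> Q k \<inter> F" using disj[of k k0] k0 by auto
      then show "indicator (Q k \<inter> F) x * ennreal (\<kappa>3 * b k) = 0" by simp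
    qed
    have "(\<Sum>k\<in>C. indicator (Q k \<inter> F) x * ennreal (\<kappa>3 * b k))
        = indicator (Q k0 \<inter> F) x * ennreal (\<kappa>3 * b k0)"
      using sum.remove[OF finC k0(1), of "\<lambda>k. indicator (Q k \<inter> F) x * ennreal (\<kappa>3 * b k)"] rest by simp
    also have "\<dots> = ennreal \<kappa>3 * emeasure lebesgue (Q k0 - F)"
      using k0 k3 ab0 by (simp add: eb ennreal_mult)
    also have "\<dots> = (\<integral>\<^sup>+ y. ennreal \<kappa>3 * indicator (Q k0 - F) y \<partial>lebesgue)"
      by (rule nn_integral_cmult_indicator[symmetric]) (rule QF(2))
    also have "\<dots> \<le> (\<integral>\<^sup>+ y. indicator (ball 0 R) x * indicator F x * indicator (- F) y * ennreal (K x y) \<partial>lebesgue)"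
    proof (rule nn_integral_mono)
      fix y
      show "ennreal \<kappa>3 * indicator (Q k0 - F) y \<le> indicator (ball 0 R) x * indicator F x * indicator (- F) y * ennreal (K x y)"
      proof (cases "y \<in> Q k0 - F")
        case True
        have xb: "x \<in> ball 0 R" using k0 unfolding C_def Q_def by auto
        have "K x y \<ge> \<kappa>3" using K_cube[OF assms(2), of x k0 y] k0 True unfolding Q_def by auto
        then show ?thesis using True k0 xb by (simp add: ennreal_leI)
      qed simp
    qed
    finally show ?thesis .
  qed
  have I: "ennreal S \<le> (\<integral>\<^sup>+ x. \<integral>\<^sup>+ y. indicator (ball 0 R) x * indicator F x * indicator (- F) y * ennreal (K x y) \<partial>lebesgue \<partial>lebesgue)"
  proof -
    have "ennreal S = (\<Sum>k\<in>C. ennreal (\<kappa>3 * a k * b k))"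
      unfolding S_def using ab0 k3 by (subst sum_ennreal) auto
    also have "\<dots> = (\<Sum>k\<in>C. \<integral>\<^sup>+ x. indicator (Q k \<inter> F) x * ennreal (\<kappa>3 * b k) \<partial>lebesgue)"
    proof (rule sum.cong[OF refl])
      fix k
      have "(\<integral>\<^sup>+ x. indicator (Q k \<inter> F) x * ennreal (\<kappa>3 * b k) \<partial>lebesgue)
          = ennreal (\<kappa>3 * b k) * emeasure lebesgue (Q k \<inter> F)"
        using nn_integral_cmult_indicator[OF QF(1), of "ennreal (\<kappa>3 * b k)"] by (simp add: mult.commute)
      also have "\<dots> = ennreal (\<kappa>3 * a k * b k)"
        using ab0 k3 by (simp add: ea ennreal_mult[symmetric] mult_ac)
      finally show "ennreal (\<kappa>3 * a k * b k) = (\<integral>\<^sup>+ x. indicator (Q k \<inter> F) x * ennreal (\<kappa>3 * b k) \<partial>lebesgue)" by simp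
    qed
    also have "\<dots> = (\<integral>\<^sup>+ x. (\<Sum>k\<in>C. indicator (Q k \<inter> F) x * ennreal (\<kappa>3 * b k)) \<partial>lebesgue)"
      by (rule nn_integral_sum[symmetric], rule borel_measurable_times_ennreal, rule borel_measurable_indicator, rule QF(1), rule borel_measurable_const)
    also have "\<dots> \<le> (\<integral>\<^sup>+ x. \<integral>\<^sup>+ y. indicator (ball 0 R) x * indicator F x * indicator (- F) y * ennreal (K x y) \<partial>lebesgue \<partial>lebesgue)"
      by (rule nn_integral_mono) (rule inner)
    finally show ?thesis .
  qed
  define II where "II = (\<integral>\<^sup>+ x. \<integral>\<^sup>+ y. indicator (ball 0 R) x * indicator F x * indicator (- F) y * ennreal (K x y) \<partial>lebesgue \<partial>lebesgue)"
  have "enn2ereal (ennreal S) \<le> enn2ereal II" using I unfolding II_def[symmetric] less_eq_ennreal.rep_eq .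
  then have e1: "ereal S \<le> enn2ereal II" using enn2ereal_ennreal[OF S0] by simp
  have e2: "ereal (- S) \<le> ereal (LINT x : cube_union (ball 0 R) \<inter> F | lebesgue. g x)"
    using Glow by simp
  have "ereal S + ereal (- S) \<le> energy K g F R"
    unfolding energy_def II_def[symmetric] by (rule add_mono[OF e1 e2])
  then show "energy K g F R \<ge> 0" by (simp add: zero_ereal_def)
qed

end
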